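(* Let $(t_j^i)_{0\le j\le i}$ be real numbers and let $h_{j,k}^i$ ($0\le k\le i$, $0\le j\le i-k$) be defined by $h_{j,0}^i=t_j^i$ and $h_{j,k}^i=h_{j,k-1}^{i-1}+h_{j,k-1}^{i}+h_{j+1,k-1}^{i}$ for $k\ge 1$. If $t_j^i=t_{i-j}^i$ for all $0\le j\le i$, then $h_{j,k}^i=h_{i-(j+k),k}^i$ for all $0\leq k \leq i$, $0\leq j \leq i-k$. *)

theory Defs
  imports Complex_Main
begin

text \<open>The triangular array t is given as a function t i j (meaningful for j \<le> i).
  hh t i j k is h^i_{j,k}; the recursion only refers to indices within the
  range 0 \<le> k \<le> i, 0 \<le> j \<le> i - k when started inside that range.\<close>

primrec hh :: "(nat \<Rightarrow> nat \<Rightarrow> real) \<Rightarrow> nat \<Rightarrow> nat \<Rightarrow> nat \<Rightarrow> real" where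
  "hh t i j 0 = t i j"
| "hh t i j (Suc k) = hh t (i - 1) j k + hh t i j k + hh t i (Suc j) k"

end

theory Submission
  imports Defs
begin

theorem theorem5:
  fixes t :: "nat \<Rightarrow> nat \<Rightarrow> real"
  assumes sym: "\<And>i j. j \<le> i \<Longrightarrow> t i j = t i (i - j)"
  shows "\<forall>i k j. k \<le> i \<longrightarrow> j \<le> i - k \<longrightarrow> hh t i j k = hh t i (i - (j + k)) k"
proof -
  have "\<forall>i j. k \<le> i \<longrightarrow> j \<le> i - k \<longrightarrow> hh t i j k = hh t i (i - (j + k)) k" for k
  proof (induction k)
    case 0
    show ?case
    proof (intro allI impI)
      fix i j :: nat assume "0 \<le> i" "j \<le> i - 0"
      then have "t i j = t i (i - j)" by (intro sym) simp
      then show "hh t i j 0 = hh t i (i - (j + 0)) 0" by (simp only: hh.simps add_0_right)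
    qed
  next
    case (Suc k)
    show ?case
    proof (intro allI impI)
      fix i j assume a: "Suc k \<le> i" "j \<le> i - Suc k"
      have e1: "hh t (i - 1) j k = hh t (i - 1) (i - 1 - (j + k)) k"
        using Suc.IH[rule_format, of "i - 1" j] a by (simp add: algebra_simps)
      have e2: "hh t i j k = hh t i (i - (j + k)) k"
        using Suc.IH[rule_format, of i j] a by simp
      have e3: "hh t i (Suc j) k = hh t i (i - (Suc j + k)) k"
        using Suc.IH[rule_format, of i "Suc j"] a by simp
      have i1: "i - (j + Suc k) = i - 1 - (j + k)" using a by simp
      have i2: "Suc (i - (j + Suc k)) = i - (j + k)" using a by simp
      have i3: "i - (Suc j + k) = i - (j + Suc k)" by simp
      have "hh t i j (Suc k) = hh t (i - 1) j k + hh t i j k + hh t i (Suc j) k" by simp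
      also have "\<dots> = hh t (i - 1) (i - (j + Suc k)) k + hh t i (Suc (i - (j + Suc k))) k + hh t i (i - (j + Suc k)) k"
        using e1 e2 e3 i1 i2 i3 by simp
      also have "\<dots> = hh t i (i - (j + Suc k)) (Suc k)" by simp
      finally show "hh t i j (Suc k) = hh t i (i - (j + Suc k)) (Suc k)" .
    qed
  qed
  then show ?thesis by blast
qed

end
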